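(* Let $\Omega\subseteq\mathbb{R}^N$ be open and bounded and let $T$ be the operator described in the context. Then $T$ is bounded from $L^1(\Omega)$ to weak-$L^1(\Omega)$, i.e., there is a constant $M_1>0$ such that for every $f\in L^1(\Omega)$ and every $\lambda>0$, $$\big|\{x\in\Omega:\ |Tf(x)|>\lambda\}\big|\le\frac{M_1}{\lambda}\|f\|_{L^1(\Omega)}.$$
   Context: $\rho\in C_c^\infty(\mathbb{R}^N)$ satisfies $0\le\rho\le1$, $\rho(x)=0$ iff $|x|\ge1$, $\rho$ is radially symmetric, and $\rho(x)\ge\rho(1/2)$ for all $|x|<1/2$ (where $\rho(1/2)$ denotes the common value of $\rho$ on the sphere $|x|=1/2$). Set $M_\rho:=(\int_{B_1(0)}\rho(y)\,dy)^{-1}$. Let $\Delta\subseteq\overline{\Omega}$ (possibly empty) be such that $\Theta:=\partial\Omega\cup\Delta$ is closed, and let $\eta\in C^\infty(\mathbb{R}^N)$ be non-negative with $\eta^{-1}(\{0\})=\Theta$, all derivatives of $\eta$ vanishing on $\Theta$, and $\eta(x)<\mathrm{dist}(x,\Theta)$ for every $x\in\mathbb{R}^N\setminus\Theta$. For $f\in L^1_{loc}(\Omega)$ and $x\in\Omega$ define $Tf(x):=M_\rho\int_{B_1(0)}\rho(z)f(x-\eta(x)z)\,dz$; thus $Tf(x)=f(x)$ if $\eta(x)=0$ and $Tf(x)=\frac{M_\rho}{\eta(x)^N}\int_\Omega\rho\big(\frac{x-y}{\eta(x)}\big)f(y)\,dy$ if $\eta(x)>0$. *)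

theory Defs
  imports "HOL-Analysis.Analysis"
begin

fun iter_pd :: "'a::euclidean_space list \<Rightarrow> ('a \<Rightarrow> real) \<Rightarrow> ('a \<Rightarrow> real)" where
  "iter_pd [] f = f"
| "iter_pd (v # vs) f = (\<lambda>x. frechet_derivative (iter_pd vs f) (at x) v)"

definition smooth_fun :: "('a::euclidean_space \<Rightarrow> real) \<Rightarrow> bool" where
  "smooth_fun f \<longleftrightarrow> (\<forall>vs. set vs \<subseteq> Basis \<longrightarrow> (\<forall>x. iter_pd vs f differentiable (at x)))"

definition M_rho :: "('a::euclidean_space \<Rightarrow> real) \<Rightarrow> real" where
  "M_rho \<rho> = inverse (LINT y : ball 0 1 | lebesgue. \<rho> y)"

definition T_op :: "('a::euclidean_space \<Rightarrow> real) \<Rightarrow> ('a \<Rightarrow> real) \<Rightarrow> ('a \<Rightarrow> real) \<Rightarrow> 'a \<Rightarrow> real" where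
  "T_op \<rho> \<eta> f x = M_rho \<rho> * (LINT z : ball 0 1 | lebesgue. \<rho> z * f (x - \<eta> x *\<^sub>R z))"

end

theory Submission
  imports Defs "HOL-Analysis.Analysis"
begin


lemma affine_lebesgue_eq:
  fixes t :: "'a::euclidean_space" and c :: real
  assumes c: "c \<noteq> 0"
  shows "lebesgue = density (distr lebesgue lebesgue (\<lambda>x. t + c *\<^sub>R x)) (\<lambda>_. ennreal (\<bar>c\<bar> ^ DIM('a)))"
    and "(\<lambda>x. t + c *\<^sub>R x) \<in> lebesgue \<rightarrow>\<^sub>M lebesgue"
  using lebesgue_affine_euclidean[where c="\<lambda>_::'a. c" and t=t] lebesgue_affine_measurable[where c="\<lambda>_::'a. c" and t=t] c
  unfolding scaleR_scaleR[symmetric] scaleR_sum_right[symmetric] euclidean_representation prod_constant by auto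

lemma affine_lebesgue:
  fixes h :: "'a::euclidean_space \<Rightarrow> real" and c :: real
  assumes c: "c \<noteq> 0" and h: "h \<in> borel_measurable lebesgue"
  shows "integral\<^sup>L lebesgue h = \<bar>c\<bar> ^ DIM('a) * (\<integral>z. h (t + c *\<^sub>R z) \<partial>lebesgue)"
proof -
  note eq = affine_lebesgue_eq[OF c, of t]
  have "integral\<^sup>L lebesgue h = integral\<^sup>L (density (distr lebesgue lebesgue (\<lambda>x. t + c *\<^sub>R x)) (\<lambda>_. ennreal (\<bar>c\<bar> ^ DIM('a)))) h"
    using eq(1) by simp
  also have "\<dots> = integral\<^sup>L (distr lebesgue lebesgue (\<lambda>x. t + c *\<^sub>R x)) (\<lambda>x. \<bar>c\<bar> ^ DIM('a) * h x)"
    by (subst integral_density) (use h in auto)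
  also have "\<dots> = (\<integral>z. \<bar>c\<bar> ^ DIM('a) * h (t + c *\<^sub>R z) \<partial>lebesgue)"
    by (subst integral_distr) (use h eq(2) in auto)
  finally show ?thesis by simp
qed

lemma affine_lebesgue_integrable:
  fixes h :: "'a::euclidean_space \<Rightarrow> real" and c :: real
  assumes c: "c \<noteq> 0" and h: "integrable lebesgue h"
  shows "integrable lebesgue (\<lambda>z. h (t + c *\<^sub>R z))"
proof -
  note eq = affine_lebesgue_eq[OF c, of t]
  have hm: "h \<in> borel_measurable lebesgue" using h by auto
  have "integrable (density (distr lebesgue lebesgue (\<lambda>x. t + c *\<^sub>R x)) (\<lambda>_. ennreal (\<bar>c\<bar> ^ DIM('a)))) h"
    using eq(1) h by simp
  then have "integrable (distr lebesgue lebesgue (\<lambda>x. t + c *\<^sub>R x)) (\<lambda>x. \<bar>c\<bar> ^ DIM('a) *\<^sub>R h x)"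
    by (subst (asm) integrable_density) (use hm in auto)
  then have "integrable lebesgue (\<lambda>z. \<bar>c\<bar> ^ DIM('a) *\<^sub>R h (t + c *\<^sub>R z))"
    by (subst (asm) integrable_distr_eq) (use hm eq(2) in auto)
  then show ?thesis using c by simp
qed

lemma "measure lebesgue (ball (c::'a::euclidean_space) r) = r ^ DIM('a) * measure lebesgue (ball (0::'a) 1)" if "r \<ge> 0"
  using content_ball_conv_unit_ball[OF that, of c] by simp
lemma "measure lebesgue (ball (c::'a::euclidean_space) r) > 0" if "r > 0"
  using content_ball_pos[OF that, of c] by simp


lemma lebesgue_id_meas: "(\<lambda>x::'a::euclidean_space. x) \<in> borel_measurable lebesgue"
  by (rule measurable_completion) simp

lemma kernel_rep:
  fixes \<rho> f :: "'a::euclidean_space \<Rightarrow> real"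
  assumes \<rho>m: "\<rho> \<in> borel_measurable borel" and \<rho>0: "\<And>z. norm z \<ge> 1 \<Longrightarrow> \<rho> z = 0"
    and gm: "(\<lambda>y. indicator \<Omega> y * f y) \<in> borel_measurable lebesgue"
    and e: "e > 0" and sub: "ball x e \<subseteq> \<Omega>"
  shows "(LINT z : ball 0 1 | lebesgue. \<rho> z * f (x - e *\<^sub>R z))
       = inverse e ^ DIM('a) * (\<integral>y. \<rho> ((x - y) /\<^sub>R e) * (indicator \<Omega> y * f y) \<partial>lebesgue)"
proof -
  define k where "k y = \<rho> ((x - y) /\<^sub>R e) * (indicator \<Omega> y * f y)" for y
  have km: "k \<in> borel_measurable lebesgue"
  proof -
    note [measurable] = gm \<rho>m lebesgue_id_meas
    show ?thesis unfolding k_def by measurable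
  qed
  have pt: "indicator (ball 0 1) z *\<^sub>R (\<rho> z * f (x - e *\<^sub>R z)) = k (x + (- e) *\<^sub>R z)" for z
  proof (cases "norm z < 1")
    case True
    have "x - e *\<^sub>R z \<in> ball x e" using True e by (simp add: dist_norm)
    then have "x - e *\<^sub>R z \<in> \<Omega>" using sub by auto
    moreover have "(x - (x - e *\<^sub>R z)) /\<^sub>R e = z" using e by simp
    ultimately show ?thesis using True by (simp add: k_def)
  next
    case False
    have "(x - (x - e *\<^sub>R z)) /\<^sub>R e = z" using e by simp
    then show ?thesis using False \<rho>0[of z] by (simp add: k_def)
  qed
  have "(LINT z : ball 0 1 | lebesgue. \<rho> z * f (x - e *\<^sub>R z)) = (\<integral>z. k (x + (- e) *\<^sub>R z) \<partial>lebesgue)"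
    unfolding set_lebesgue_integral_def using pt by simp
  also have "\<dots> = inverse e ^ DIM('a) * integral\<^sup>L lebesgue k"
    using affine_lebesgue[OF _ km, of "-e" x] e by (simp add: field_simps)
  finally show ?thesis unfolding k_def by simp
qed

lemma kernel_bound:
  fixes \<rho> g :: "'a::euclidean_space \<Rightarrow> real"
  assumes \<rho>m: "\<rho> \<in> borel_measurable borel" and \<rho>0: "\<And>z. norm z \<ge> 1 \<Longrightarrow> \<rho> z = 0"
    and \<rho>r: "\<And>z. 0 \<le> \<rho> z \<and> \<rho> z \<le> 1"
    and g: "integrable lebesgue g" and e: "e > 0"
  shows "\<bar>\<integral>y. \<rho> ((x - y) /\<^sub>R e) * g y \<partial>lebesgue\<bar> \<le> (\<integral>y. indicator (ball x e) y * \<bar>g y\<bar> \<partial>lebesgue)"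
proof -
  have gm: "g \<in> borel_measurable lebesgue" using g by auto
  have pt: "\<bar>\<rho> ((x - y) /\<^sub>R e) * g y\<bar> \<le> indicator (ball x e) y * \<bar>g y\<bar>" for y
  proof (cases "y \<in> ball x e")
    case True
    then show ?thesis using \<rho>r[of "(x - y) /\<^sub>R e"] by (simp add: abs_mult mult_left_le_one_le)
  next
    case False
    then have "norm (x - y) \<ge> e" by (simp add: dist_norm)
    moreover have "norm ((x - y) /\<^sub>R e) = norm (x - y) / e" using e by (simp add: divide_inverse_commute)
    ultimately have "norm ((x - y) /\<^sub>R e) \<ge> 1" using e by simp
    then show ?thesis using False \<rho>0 by simp
  qed
  have i2: "integrable lebesgue (\<lambda>y. indicator (ball x e) y * \<bar>g y\<bar>)"
  proof (rule Bochner_Integration.integrable_bound[OF g])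
    note [measurable] = gm
    show "(\<lambda>y. indicator (ball x e) y * \<bar>g y\<bar>) \<in> borel_measurable lebesgue"
      by (intro borel_measurable_times borel_measurable_indicator borel_measurable_abs gm) simp
  qed (auto simp: indicator_def)
  have i1: "integrable lebesgue (\<lambda>y. \<bar>\<rho> ((x - y) /\<^sub>R e) * g y\<bar>)"
  proof (rule Bochner_Integration.integrable_bound[OF i2])
    note [measurable] = gm \<rho>m lebesgue_id_meas
    show "(\<lambda>y. \<bar>\<rho> ((x - y) /\<^sub>R e) * g y\<bar>) \<in> borel_measurable lebesgue" by measurable
  qed (use pt in auto)
  have "\<bar>\<integral>y. \<rho> ((x - y) /\<^sub>R e) * g y \<partial>lebesgue\<bar> \<le> (\<integral>y. \<bar>\<rho> ((x - y) /\<^sub>R e) * g y\<bar> \<partial>lebesgue)"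
    by (rule integral_abs_bound)
  also have "\<dots> \<le> (\<integral>y. indicator (ball x e) y * \<bar>g y\<bar> \<partial>lebesgue)"
    by (rule integral_mono[OF i1 i2 pt])
  finally show ?thesis .
qed

lemma kernel_cont:
  fixes \<rho> g \<eta> :: "'a::euclidean_space \<Rightarrow> real"
  assumes \<rho>c: "continuous_on UNIV \<rho>"
    and \<rho>r: "\<And>z. 0 \<le> \<rho> z \<and> \<rho> z \<le> 1"
    and g: "integrable lebesgue g" and e: "\<eta> x0 \<noteq> 0" and \<eta>c: "isCont \<eta> x0"
  shows "isCont (\<lambda>x. \<integral>y. \<rho> ((x - y) /\<^sub>R \<eta> x) * g y \<partial>lebesgue) x0"
proof (rule continuous_at_sequentiallyI)
  fix X :: "nat \<Rightarrow> 'a" assume X: "X \<longlonglongrightarrow> x0"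
  have \<rho>m: "\<rho> \<in> borel_measurable borel" using \<rho>c by (rule borel_measurable_continuous_onI)
  have gm: "g \<in> borel_measurable lebesgue" using g by auto
  note [measurable] = gm \<rho>m lebesgue_id_meas
  show "(\<lambda>n. \<integral>y. \<rho> ((X n - y) /\<^sub>R \<eta> (X n)) * g y \<partial>lebesgue) \<longlonglongrightarrow> (\<integral>y. \<rho> ((x0 - y) /\<^sub>R \<eta> x0) * g y \<partial>lebesgue)"
  proof (rule integral_dominated_convergence[where w="\<lambda>y. \<bar>g y\<bar>"])
    show "(\<lambda>y. \<rho> ((x0 - y) /\<^sub>R \<eta> x0) * g y) \<in> borel_measurable lebesgue"
      by measurable
    show "(\<lambda>y. \<rho> ((X n - y) /\<^sub>R \<eta> (X n)) * g y) \<in> borel_measurable lebesgue" for n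
      by measurable
    show "integrable lebesgue (\<lambda>y. \<bar>g y\<bar>)" using g by auto
    show "AE y in lebesgue. norm (\<rho> ((X n - y) /\<^sub>R \<eta> (X n)) * g y) \<le> \<bar>g y\<bar>" for n
      using \<rho>r by (auto simp: abs_mult mult_left_le_one_le)
    show "AE y in lebesgue. (\<lambda>n. \<rho> ((X n - y) /\<^sub>R \<eta> (X n)) * g y) \<longlonglongrightarrow> \<rho> ((x0 - y) /\<^sub>R \<eta> x0) * g y"
    proof (intro AE_I2 tendsto_mult_right)
      fix y
      have h1: "(\<lambda>n. \<eta> (X n)) \<longlonglongrightarrow> \<eta> x0" using \<eta>c X by (rule isCont_tendsto_compose)
      have "(\<lambda>n. (X n - y) /\<^sub>R \<eta> (X n)) \<longlonglongrightarrow> (x0 - y) /\<^sub>R \<eta> x0"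
        by (intro tendsto_intros X h1 e)
      moreover have "isCont \<rho> ((x0 - y) /\<^sub>R \<eta> x0)" using \<rho>c by (simp add: continuous_on_eq_continuous_at)
      ultimately show "(\<lambda>n. \<rho> ((X n - y) /\<^sub>R \<eta> (X n))) \<longlonglongrightarrow> \<rho> ((x0 - y) /\<^sub>R \<eta> x0)"
        by (rule isCont_tendsto_compose[rotated])
    qed
  qed
qed

lemma ball_inside:
  fixes \<Omega> \<Theta> :: "'a::euclidean_space set"
  assumes "x \<in> \<Omega>" "frontier \<Omega> \<subseteq> \<Theta>" "r < infdist x \<Theta>"
  shows "ball x r \<subseteq> \<Omega>"
proof
  fix y assume y: "y \<in> ball x r"
  show "y \<in> \<Omega>"
  proof (rule ccontr)
    assume "y \<notin> \<Omega>"
    then have "closed_segment x y \<inter> frontier \<Omega> \<noteq> {}"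
      using assms(1) by (intro connected_Int_frontier) auto
    then obtain p where p: "p \<in> closed_segment x y" "p \<in> frontier \<Omega>" by auto
    have "dist x p \<le> dist x y" using dist_in_closed_segment[OF p(1)] by (simp add: dist_commute)
    then have "dist x p < infdist x \<Theta>" using y assms(3) by (simp add: dist_commute)
    moreover have "infdist x \<Theta> \<le> dist x p" using p(2) assms(2) by (intro infdist_le) auto
    ultimately show False by simp
  qed
qed


lemma measure_ball_scale:
  fixes x :: "'a::euclidean_space"
  assumes "r \<ge> 0"
  shows "measure lebesgue (ball x (5 * r)) = 5 ^ DIM('a) * measure lebesgue (ball x r)"
proof -
  have "measure lebesgue (ball x (5 * r)) = (5 * r) ^ DIM('a) * measure lebesgue (ball (0::'a) 1)"
    using content_ball_conv_unit_ball[of "5 * r" x] assms by simp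
  moreover have "measure lebesgue (ball x r) = r ^ DIM('a) * measure lebesgue (ball (0::'a) 1)"
    using content_ball_conv_unit_ball[of r x] assms by simp
  ultimately show ?thesis by (simp add: power_mult_distrib)
qed

lemma compact_cover_bound:
  fixes \<eta> g :: "'a::euclidean_space \<Rightarrow> real"
  assumes K: "compact K" and pos: "\<And>x. x \<in> K \<Longrightarrow> \<eta> x > 0"
    and A: "A \<ge> 0"
    and bd: "\<And>x. x \<in> K \<Longrightarrow> measure lebesgue (ball x (\<eta> x)) \<le> A * (\<integral>y. indicator (ball x (\<eta> x)) y * \<bar>g y\<bar> \<partial>lebesgue)"
    and g: "integrable lebesgue g"
  shows "measure lebesgue K \<le> 5 ^ DIM('a) * A * (\<integral>y. \<bar>g y\<bar> \<partial>lebesgue)"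
proof -
  have gm: "g \<in> borel_measurable lebesgue" using g by auto
  have "K \<subseteq> (\<Union>x\<in>K. ball x (\<eta> x))" using pos by auto
  then obtain F where F: "F \<subseteq> K" "finite F" "K \<subseteq> (\<Union>x\<in>F. ball x (\<eta> x))"
    using compactE_image[OF K, of K "\<lambda>x. ball x (\<eta> x)"] by auto
  obtain C where C: "countable C" "C \<subseteq> F"
     "pairwise (\<lambda>i j. disjnt (ball i (\<eta> i)) (ball j (\<eta> j))) C"
     "K \<subseteq> (\<Union>i\<in>C. ball i (5 * \<eta> i))"
    by (rule Vitali_covering_lemma_balls[where S=K and K=F and a="\<lambda>x. x" and r=\<eta> and B="Max (\<eta> ` F)"])
       (use F pos in auto)
  have finC: "finite C" using C(2) F(2) finite_subset by blast
  have iB: "integrable lebesgue (\<lambda>y. indicator (B::'a set) y * \<bar>g y\<bar>)" if "B \<in> sets lebesgue" for B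
  proof (rule Bochner_Integration.integrable_bound[OF g])
    show "(\<lambda>y. indicator B y * \<bar>g y\<bar>) \<in> borel_measurable lebesgue"
      by (intro borel_measurable_times borel_measurable_indicator borel_measurable_abs gm that)
  qed (auto simp: indicator_def)
  have "measure lebesgue K \<le> measure lebesgue (\<Union>i\<in>C. ball i (5 * \<eta> i))"
  proof (rule measure_mono_fmeasurable[OF C(4)])
    show "K \<in> sets lebesgue" using K by (simp add: compact_imp_closed)
    show "(\<Union>i\<in>C. ball i (5 * \<eta> i)) \<in> lmeasurable"
      using finC by (intro fmeasurable.finite_UN) auto
  qed
  also have "\<dots> \<le> (\<Sum>i\<in>C. measure lebesgue (ball i (5 * \<eta> i)))"
    using finC by (intro measure_UNION_le) auto
  also have "\<dots> = (\<Sum>i\<in>C. 5 ^ DIM('a) * measure lebesgue (ball i (\<eta> i)))"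
    using C(2) F(1) pos by (intro sum.cong refl measure_ball_scale) (auto intro: less_imp_le)
  also have "\<dots> \<le> (\<Sum>i\<in>C. 5 ^ DIM('a) * (A * (\<integral>y. indicator (ball i (\<eta> i)) y * \<bar>g y\<bar> \<partial>lebesgue)))"
    using C(2) F(1) bd by (intro sum_mono mult_left_mono) auto
  also have "\<dots> = 5 ^ DIM('a) * A * (\<Sum>i\<in>C. (\<integral>y. indicator (ball i (\<eta> i)) y * \<bar>g y\<bar> \<partial>lebesgue))"
    by (simp add: sum_distrib_left mult.assoc)
  also have "(\<Sum>i\<in>C. (\<integral>y. indicator (ball i (\<eta> i)) y * \<bar>g y\<bar> \<partial>lebesgue))
      = (\<integral>y. (\<Sum>i\<in>C. indicator (ball i (\<eta> i)) y * \<bar>g y\<bar>) \<partial>lebesgue)"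
    by (subst Bochner_Integration.integral_sum) (auto intro: iB)
  also have "\<dots> = (\<integral>y. indicator (\<Union>i\<in>C. ball i (\<eta> i)) y * \<bar>g y\<bar> \<partial>lebesgue)"
  proof -
    have dj: "disjoint_family_on (\<lambda>i. ball i (\<eta> i)) C"
      using C(3) unfolding disjoint_family_on_def pairwise_def disjnt_def by metis
    show ?thesis
      by (simp add: indicator_UN_disjoint[OF finC dj] sum_distrib_right)
  qed
  also have "\<dots> \<le> (\<integral>y. \<bar>g y\<bar> \<partial>lebesgue)"
    by (rule integral_mono[OF iB]) (use g finC in \<open>auto simp: indicator_def\<close>)
  finally show ?thesis
    by (simp add: A mult_left_mono)
qed


lemma set_cover_bound:
  fixes \<eta> g :: "'a::euclidean_space \<Rightarrow> real"
  assumes E: "E \<in> sets lebesgue" "bounded E" and pos: "\<And>x. x \<in> E \<Longrightarrow> \<eta> x > 0"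
    and A: "A \<ge> 0"
    and bd: "\<And>x. x \<in> E \<Longrightarrow> measure lebesgue (ball x (\<eta> x)) \<le> A * (\<integral>y. indicator (ball x (\<eta> x)) y * \<bar>g y\<bar> \<partial>lebesgue)"
    and g: "integrable lebesgue g"
  shows "measure lebesgue E \<le> 5 ^ DIM('a) * A * (\<integral>y. \<bar>g y\<bar> \<partial>lebesgue)"
proof (rule field_le_epsilon)
  fix e :: real assume e: "e > 0"
  obtain T where T: "closed T" "T \<subseteq> E" "E - T \<in> lmeasurable" "emeasure lebesgue (E - T) < ennreal e"
    using sets_lebesgue_inner_closed[OF E(1) e] by blast
  have Tc: "compact T" using T(1,2) E(2) bounded_subset by (auto simp: compact_eq_bounded_closed)
  have EL: "E \<in> lmeasurable" by (rule bounded_set_imp_lmeasurable[OF E(2) E(1)])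
  have TL: "T \<in> sets lebesgue" using T(1) by simp
  have "measure lebesgue (E - T) < e"
    using T(3,4) e by (simp add: emeasure_eq_measure2 ennreal_less_iff)
  moreover have "measure lebesgue (E - T) = measure lebesgue E - measure lebesgue T"
    using EL TL T(2) by (intro measure_Diff) (auto simp: fmeasurable_def)
  moreover have "measure lebesgue T \<le> 5 ^ DIM('a) * A * (\<integral>y. \<bar>g y\<bar> \<partial>lebesgue)"
    by (rule compact_cover_bound[where \<eta>=\<eta>, OF Tc _ A _ g]) (use T(2) pos bd in auto)
  ultimately show "measure lebesgue E \<le> 5 ^ DIM('a) * A * (\<integral>y. \<bar>g y\<bar> \<partial>lebesgue) + e" by linarith
qed


theorem proposition3p1:
  fixes \<Omega> \<Delta> :: "'a::euclidean_space set"
    and \<rho> \<eta> :: "'a \<Rightarrow> real"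
  assumes \<Omega>_open: "open \<Omega>" and \<Omega>_bdd: "bounded \<Omega>"
    and \<rho>_smooth: "smooth_fun \<rho>"
    and \<rho>_supp: "compact (closure {x. \<rho> x \<noteq> 0})"
    and \<rho>_range: "\<And>x. 0 \<le> \<rho> x \<and> \<rho> x \<le> 1"
    and \<rho>_zero: "\<And>x. \<rho> x = 0 \<longleftrightarrow> norm x \<ge> 1"
    and \<rho>_radial: "\<And>x y. norm x = norm y \<Longrightarrow> \<rho> x = \<rho> y"
    and \<rho>_half: "\<And>x y. norm x < 1/2 \<Longrightarrow> norm y = 1/2 \<Longrightarrow> \<rho> x \<ge> \<rho> y"
    and \<Delta>_sub: "\<Delta> \<subseteq> closure \<Omega>"
    and \<Theta>_closed: "closed (frontier \<Omega> \<union> \<Delta>)"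
    and \<eta>_smooth: "smooth_fun \<eta>"
    and \<eta>_nonneg: "\<And>x. \<eta> x \<ge> 0"
    and \<eta>_zero: "\<eta> -` {0} = frontier \<Omega> \<union> \<Delta>"
    and \<eta>_flat: "\<And>vs x. set vs \<subseteq> Basis \<Longrightarrow> x \<in> frontier \<Omega> \<union> \<Delta> \<Longrightarrow> iter_pd vs \<eta> x = 0"
    and \<eta>_dist: "\<And>x. x \<notin> frontier \<Omega> \<union> \<Delta> \<Longrightarrow> \<eta> x < infdist x (frontier \<Omega> \<union> \<Delta>)"
  shows "\<exists>M1 > 0. \<forall>f. set_integrable lebesgue \<Omega> f \<longrightarrow> (\<forall>lam > 0.
           {x \<in> \<Omega>. \<bar>T_op \<rho> \<eta> f x\<bar> > lam} \<in> sets lebesgue \<and>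
           measure lebesgue {x \<in> \<Omega>. \<bar>T_op \<rho> \<eta> f x\<bar> > lam}
             \<le> M1 / lam * (LINT x : \<Omega> | lebesgue. \<bar>f x\<bar>))"
proof -
  define \<Theta> where "\<Theta> = frontier \<Omega> \<union> \<Delta>"
  define U where "U = \<Omega> - \<Theta>"
  define N where "N = DIM('a)"
  define I where "I = (LINT y : ball 0 1 | lebesgue. \<rho> y)"
  define M where "M = M_rho \<rho>"
  define \<omega> where "\<omega> = measure lebesgue (ball (0::'a) 1)"
  have \<rho>c: "continuous_on UNIV \<rho>"
  proof -
    have "\<forall>x. iter_pd [] \<rho> differentiable (at x)" using \<rho>_smooth unfolding smooth_fun_def by (metis empty_set empty_subsetI)
    then show ?thesis
      by (auto intro!: continuous_at_imp_continuous_on differentiable_imp_continuous_within)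
  qed
  have \<eta>c: "isCont \<eta> x" for x
  proof -
    have "\<forall>x. iter_pd [] \<eta> differentiable (at x)" using \<eta>_smooth unfolding smooth_fun_def by (metis empty_set empty_subsetI)
    then show ?thesis by (auto intro!: differentiable_imp_continuous_within)
  qed
  have \<rho>m: "\<rho> \<in> borel_measurable borel" using \<rho>c by (rule borel_measurable_continuous_onI)
  have \<rho>0: "\<And>z. norm z \<ge> 1 \<Longrightarrow> \<rho> z = 0" using \<rho>_zero by blast
  have \<omega>pos: "\<omega> > 0" unfolding \<omega>_def using content_ball_pos[of 1 "0::'a"] by simp
  have Ipos: "I > 0"
  proof -
    obtain b :: 'a where b: "b \<in> Basis" using nonempty_Basis by blast
    define y0 where "y0 = (1/2) *\<^sub>R b"
    have ny0: "norm y0 = 1/2" using b by (simp add: y0_def)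
    define c where "c = \<rho> y0"
    have cpos: "c > 0" using \<rho>_zero[of y0] \<rho>_range[of y0] ny0 by (simp add: c_def)
    have i1: "integrable lebesgue (\<lambda>z. indicator (ball (0::'a) (1/2)) z * c)"
      by (intro integrable_mult_left integrable_real_indicator) (use emeasure_lborel_ball_finite[of "0::'a"] in auto)
    have i2: "integrable lebesgue (\<lambda>z. indicator (ball (0::'a) 1) z * \<rho> z)"
    proof (rule Bochner_Integration.integrable_bound[where f="indicator (ball (0::'a) 1)"])
      show "integrable lebesgue (indicator (ball (0::'a) 1) :: 'a \<Rightarrow> real)"
        by (intro integrable_real_indicator) (use emeasure_lborel_ball_finite[of "0::'a"] in auto)
      show "(\<lambda>z. indicator (ball (0::'a) 1) z * \<rho> z) \<in> borel_measurable lebesgue"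
        using \<rho>m by (intro borel_measurable_times borel_measurable_indicator) (auto intro: measurable_completion)
    qed (use \<rho>_range in \<open>auto simp: indicator_def\<close>)
    have "0 < c * measure lebesgue (ball (0::'a) (1/2))"
      using cpos content_ball_pos[of "1/2" "0::'a"] by simp
    also have "\<dots> = (\<integral>z. indicator (ball (0::'a) (1/2)) z * c \<partial>lebesgue)"
      by (simp add: emeasure_lborel_ball_finite)
    also have "\<dots> \<le> (\<integral>z. indicator (ball (0::'a) 1) z * \<rho> z \<partial>lebesgue)"
    proof (rule integral_mono[OF i1 i2])
      fix z :: 'a
      show "indicator (ball 0 (1/2)) z * c \<le> indicator (ball 0 1) z * \<rho> z"
        using \<rho>_half[of z y0] ny0 \<rho>_range[of z] by (auto simp: indicator_def c_def)
    qed
    also have "\<dots> = I" unfolding I_def set_lebesgue_integral_def by simp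
    finally show ?thesis .
  qed
  have Mpos: "M > 0" unfolding M_def M_rho_def using Ipos I_def by simp
  have frU: "frontier \<Omega> \<subseteq> \<Theta>" unfolding \<Theta>_def by auto
  have \<eta>posU: "\<eta> x > 0" if "x \<in> U" for x
  proof -
    have "\<eta> x \<noteq> 0" using that \<eta>_zero unfolding U_def \<Theta>_def by auto
    then show ?thesis using \<eta>_nonneg[of x] by simp
  qed
  have ballU: "ball x (\<eta> x) \<subseteq> \<Omega>" if "x \<in> U" for x
    using that \<eta>_dist[of x] unfolding U_def \<Theta>_def
    by (intro ball_inside[where \<Theta>="frontier \<Omega> \<union> \<Delta>"]) auto
  have \<eta>0: "\<eta> x = 0" if "x \<in> \<Theta>" for x
    using that \<eta>_zero unfolding \<Theta>_def by auto
  have openU: "open U" unfolding U_def \<Theta>_def using \<Omega>_open \<Theta>_closed by (rule open_Diff)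
  show ?thesis
  proof (intro exI[of _ "5 ^ N * \<omega> * M + 1"] conjI allI impI)
    show "0 < 5 ^ N * \<omega> * M + 1" using \<omega>pos Mpos by (simp add: add_pos_nonneg)
    fix f :: "'a \<Rightarrow> real" and lam :: real
    assume fi: "set_integrable lebesgue \<Omega> f" and lam: "lam > 0"
    define g where "g y = indicator \<Omega> y * f y" for y
    have gi: "integrable lebesgue g" using fi unfolding set_integrable_def g_def by simp
    have gm: "g \<in> borel_measurable lebesgue" using gi by auto
    define G where "G = (\<integral>y. \<bar>g y\<bar> \<partial>lebesgue)"
    have G: "(LINT x : \<Omega> | lebesgue. \<bar>f x\<bar>) = G"
      unfolding G_def g_def set_lebesgue_integral_def by (simp add: abs_mult)
    define J where "J x = (\<integral>y. \<rho> ((x - y) /\<^sub>R \<eta> x) * g y \<partial>lebesgue)" for x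
    have TU: "T_op \<rho> \<eta> f x = M * (inverse (\<eta> x) ^ N * J x)" if "x \<in> U" for x
      unfolding T_op_def M_def J_def N_def g_def
      by (rule arg_cong[where f="\<lambda>t. M_rho \<rho> * t"], rule kernel_rep[OF \<rho>m \<rho>0 _ \<eta>posU[OF that] ballU[OF that]])
         (use fi in \<open>auto simp: set_integrable_def dest: borel_measurable_integrable\<close>)
    have TD: "T_op \<rho> \<eta> f x = f x" if "x \<in> \<Theta>" for x
    proof -
      have "(LINT z : ball 0 1 | lebesgue. \<rho> z * f (x - \<eta> x *\<^sub>R z)) = I * f x"
        unfolding I_def set_lebesgue_integral_def using \<eta>0[OF that] by (simp add: mult.assoc[symmetric])
      then show ?thesis unfolding T_op_def M_rho_def using Ipos by (simp add: I_def[symmetric])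
    qed
    define E1 where "E1 = {x \<in> U. lam < \<bar>T_op \<rho> \<eta> f x\<bar>}"
    define E2 where "E2 = {x \<in> \<Omega> \<inter> \<Theta>. lam < \<bar>g x\<bar>}"
    have Esplit: "{x \<in> \<Omega>. \<bar>T_op \<rho> \<eta> f x\<bar> > lam} = E1 \<union> E2"
      unfolding E1_def E2_def U_def using TD by (auto simp: g_def)
    have contU: "continuous_on U (T_op \<rho> \<eta> f)"
    proof -
      have "continuous_on U (\<lambda>x. M * (inverse (\<eta> x) ^ N * J x))"
      proof (intro continuous_at_imp_continuous_on ballI)
        fix x assume x: "x \<in> U"
        have "isCont J x" unfolding J_def
          by (rule kernel_cont[OF \<rho>c \<rho>_range gi _ \<eta>c]) (use \<eta>posU[OF x] in simp)
        moreover have "isCont (\<lambda>x. inverse (\<eta> x)) x"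
          using \<eta>c[of x] \<eta>posU[OF x] by (intro continuous_intros) auto
        ultimately show "isCont (\<lambda>x. M * (inverse (\<eta> x) ^ N * J x)) x"
          using \<eta>c[of x] \<eta>posU[OF x] by (intro continuous_intros) auto
      qed
      then show ?thesis by (rule continuous_on_eq) (use TU in simp)
    qed
    have E1open: "open E1"
    proof -
      have "open {v::real. lam < \<bar>v\<bar>}" by (intro open_Collect_less continuous_intros)
      then have "open (T_op \<rho> \<eta> f -` {v. lam < \<bar>v\<bar>} \<inter> U)"
        using contU openU continuous_on_open_vimage by blast
      moreover have "T_op \<rho> \<eta> f -` {v. lam < \<bar>v\<bar>} \<inter> U = E1" unfolding E1_def by auto
      ultimately show ?thesis by simp
    qed
    have E1m: "E1 \<in> sets lebesgue" using E1open by simp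
    have E2m: "E2 \<in> sets lebesgue"
    proof -
      have "\<Omega> \<inter> \<Theta> \<in> sets lebesgue" using \<Omega>_open \<Theta>_closed unfolding \<Theta>_def by simp
      moreover have "{x. lam < \<bar>g x\<bar>} \<in> sets lebesgue"
        using borel_measurable_abs[OF gm] unfolding borel_measurable_iff_greater by simp
      ultimately have "\<Omega> \<inter> \<Theta> \<inter> {x. lam < \<bar>g x\<bar>} \<in> sets lebesgue" by simp
      moreover have "\<Omega> \<inter> \<Theta> \<inter> {x. lam < \<bar>g x\<bar>} = E2" unfolding E2_def by auto
      ultimately show ?thesis by simp
    qed
    have E1bd: "measure lebesgue E1 \<le> 5 ^ N * (\<omega> * M / lam) * G"
      unfolding N_def G_def
    proof (rule set_cover_bound[where \<eta>=\<eta>, OF E1m _ _ _ _ gi])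
      show "bounded E1" using \<Omega>_bdd unfolding E1_def U_def by (rule bounded_subset) auto
      show "\<And>x. x \<in> E1 \<Longrightarrow> 0 < \<eta> x" using \<eta>posU unfolding E1_def by auto
      show "0 \<le> \<omega> * M / lam" using \<omega>pos Mpos lam by simp
      fix x assume x: "x \<in> E1"
      have xU: "x \<in> U" using x unfolding E1_def by auto
      define t where "t = \<eta> x ^ N"
      have tpos: "t > 0" unfolding t_def using \<eta>posU[OF xU] by simp
      define P where "P = (\<integral>y. indicator (ball x (\<eta> x)) y * \<bar>g y\<bar> \<partial>lebesgue)"
      have "lam < \<bar>T_op \<rho> \<eta> f x\<bar>" using x unfolding E1_def by auto
      also have "\<dots> = M * (inverse t * \<bar>J x\<bar>)" unfolding TU[OF xU] t_def using Mpos \<eta>posU[OF xU]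
        by (simp add: abs_mult power_inverse)
      also have "\<dots> \<le> M * (inverse t * P)"
        unfolding J_def P_def using Mpos tpos
        by (intro mult_left_mono kernel_bound[OF \<rho>m \<rho>0 \<rho>_range gi \<eta>posU[OF xU]]) auto
      finally have "lam * t < M * P" using tpos by (simp add: field_simps)
      then have "t * \<omega> \<le> \<omega> * M / lam * P" using lam \<omega>pos
        by (simp add: field_simps)
      moreover have "measure lebesgue (ball x (\<eta> x)) = t * \<omega>"
        unfolding t_def \<omega>_def N_def using content_ball_conv_unit_ball[of "\<eta> x" x] \<eta>_nonneg[of x] by simp
      ultimately show "measure lebesgue (ball x (\<eta> x)) \<le> \<omega> * M / lam * P" by simp
    qed
    have E2bd: "measure lebesgue E2 \<le> G / lam"
    proof -
      have E2L: "E2 \<in> lmeasurable"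
        by (rule bounded_set_imp_lmeasurable[OF _ E2m]) (use \<Omega>_bdd in \<open>auto simp: E2_def intro: bounded_subset\<close>)
      have "lam * measure lebesgue E2 = (\<integral>y. lam * indicator E2 y \<partial>lebesgue)"
        using E2L by simp
      also have "\<dots> \<le> G"
        unfolding G_def
      proof (rule integral_mono)
        have "integrable lebesgue (indicator E2 :: 'a \<Rightarrow> real)"
          by (metis E2L fmeasurableD fmeasurableD2 integrable_real_indicator infinity_ennreal_def less_top)
        then show "integrable lebesgue (\<lambda>y. lam * indicator E2 y)" by simp
        show "integrable lebesgue (\<lambda>y. \<bar>g y\<bar>)" using gi by simp
        show "lam * indicator E2 y \<le> \<bar>g y\<bar>" for y
          using lam by (auto simp: indicator_def E2_def)
      qed
      finally show ?thesis using lam by (simp add: field_simps)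
    qed
    have G0: "G \<ge> 0" unfolding G_def by simp
    show "{x \<in> \<Omega>. \<bar>T_op \<rho> \<eta> f x\<bar> > lam} \<in> sets lebesgue"
      unfolding Esplit using E1m E2m by simp
    have "measure lebesgue {x \<in> \<Omega>. \<bar>T_op \<rho> \<eta> f x\<bar> > lam} \<le> measure lebesgue E1 + measure lebesgue E2"
      unfolding Esplit by (rule measure_Un_le[OF E1m E2m])
    also have "\<dots> \<le> 5 ^ N * (\<omega> * M / lam) * G + G / lam" using E1bd E2bd by simp
    also have "\<dots> = (5 ^ N * \<omega> * M + 1) / lam * G" using lam by (simp add: field_simps)
    finally show "measure lebesgue {x \<in> \<Omega>. \<bar>T_op \<rho> \<eta> f x\<bar> > lam}
             \<le> (5 ^ N * \<omega> * M + 1) / lam * (LINT x : \<Omega> | lebesgue. \<bar>f x\<bar>)"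
      unfolding G .
  qed
qed

end
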